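(* Let $I$ be a countable set and let $C\subseteq[0,1]^I$ be a connected (in the product topology) chain from $0$ to $1$. Then there are continuous, surjective, nondecreasing functions $f_i:[0,1]\to[0,1]$, $i\in I$, such that $\{(f_i(t))_{i\in I}:t\in[0,1]\}=C$.
   Context: $[0,1]^I$ carries the coordinatewise (product) partial order. A chain from $0$ to $1$ in $[0,1]^I$ is a subset $C$ that is linearly ordered by this order and contains the constant tuples with values $0$ and $1$. *)

theory Defs
  imports "HOL-Analysis.Analysis"
begin

text \<open>Points of [0,1]^I are represented as extensional functions on I
  (elements of PiE I (\<lambda>_. {0..1})); the coordinatewise order on them.\<close>

definition coord_le :: "'i set \<Rightarrow> ('i \<Rightarrow> real) \<Rightarrow> ('i \<Rightarrow> real) \<Rightarrow> bool" where
  "coord_le I x y \<longleftrightarrow> (\<forall>i\<in>I. x i \<le> y i)"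

definition chain_0_1 :: "'i set \<Rightarrow> ('i \<Rightarrow> real) set \<Rightarrow> bool" where
  "chain_0_1 I C \<longleftrightarrow>
     C \<subseteq> (PiE I (\<lambda>_. {0..1::real})) \<and>
     (\<forall>x\<in>C. \<forall>y\<in>C. coord_le I x y \<or> coord_le I y x) \<and>
     (\<lambda>i\<in>I. 0) \<in> C \<and> (\<lambda>i\<in>I. 1) \<in> C"

end

theory Submission imports Defs begin

definition hh :: "'i set \<Rightarrow> ('i \<Rightarrow> nat) \<Rightarrow> ('i \<Rightarrow> real) \<Rightarrow> nat \<Rightarrow> real" where
  "hh I e x n = (if n \<in> e ` I then x (inv_into I e n) else 0)"

definition ss :: "'i set \<Rightarrow> ('i \<Rightarrow> nat) \<Rightarrow> ('i \<Rightarrow> real) \<Rightarrow> real" where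
  "ss I e x = (\<Sum>n. (1/2)^n * hh I e x n)"

lemma hh_bounds:
  assumes "x \<in> PiE I (\<lambda>_. {0..1::real})"
  shows "0 \<le> hh I e x n" "hh I e x n \<le> 1"
proof -
  have "n \<in> e ` I \<Longrightarrow> inv_into I e n \<in> I" by (simp add: inv_into_into)
  then show "0 \<le> hh I e x n" "hh I e x n \<le> 1"
    using assms unfolding hh_def by (auto simp: PiE_iff)
qed

lemma ss_summable:
  assumes "x \<in> PiE I (\<lambda>_. {0..1::real})"
  shows "summable (\<lambda>n. (1/2)^n * hh I e x n)"
proof (rule summable_comparison_test)
  show "\<exists>N. \<forall>n\<ge>N. norm ((1/2)^n * hh I e x n) \<le> (1/2::real)^n"
    using hh_bounds[OF assms, of e] by (auto simp: abs_mult intro!: mult_left_le)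
  show "summable (\<lambda>n. (1/2::real)^n)" by (rule summable_geometric) simp
qed

lemma ss_mono:
  assumes "x \<in> PiE I (\<lambda>_. {0..1::real})" "y \<in> PiE I (\<lambda>_. {0..1::real})" "coord_le I x y"
  shows "ss I e x \<le> ss I e y"
  unfolding ss_def
proof (rule suminf_le)
  fix n
  have "hh I e x n \<le> hh I e y n"
    using assms(3) unfolding hh_def coord_le_def by (auto simp: inv_into_into)
  then show "(1/2)^n * hh I e x n \<le> (1/2)^n * hh I e y n" by simp
qed (use ss_summable assms in auto)

lemma ss_strict:
  assumes inj: "inj_on e I" and x: "x \<in> PiE I (\<lambda>_. {0..1::real})" and y: "y \<in> PiE I (\<lambda>_. {0..1::real})"
    and le: "coord_le I x y" and ne: "x \<noteq> y"
  shows "ss I e x < ss I e y"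
proof -
  obtain i where i: "i \<in> I" "x i \<noteq> y i" using x y ne by (meson PiE_ext)
  then have lt: "x i < y i" using le unfolding coord_le_def by force
  let ?d = "\<lambda>n. (1/2)^n * hh I e y n - (1/2)^n * hh I e x n"
  have "0 < suminf ?d"
  proof (rule suminf_pos2)
    show "summable ?d" using ss_summable[OF x] ss_summable[OF y] by (rule summable_diff[rotated])
    fix n
    have "hh I e x n \<le> hh I e y n"
      using le unfolding hh_def coord_le_def by (auto simp: inv_into_into)
    then show "0 \<le> ?d n" by simp
  next
    have "inv_into I e (e i) = i" using inj i by (simp add: inv_into_f_f)
    then have "hh I e x (e i) < hh I e y (e i)" using i lt unfolding hh_def by auto
    then show "0 < ?d (e i)" by simp
  qed
  also have "suminf ?d = ss I e y - ss I e x"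
    unfolding ss_def using suminf_diff[OF ss_summable[OF y, of e] ss_summable[OF x, of e]] by simp
  finally show ?thesis by simp
qed

lemma ss_cont:
  "continuous_map (product_topology (\<lambda>i. top_of_set {0..1::real}) I) euclideanreal (ss I e)"
proof -
  let ?X = "product_topology (\<lambda>i. top_of_set {0..1::real}) I"
  let ?t = "\<lambda>x n. (1/2::real)^n * hh I e x n"
  have top: "topspace ?X = PiE I (\<lambda>_. {0..1::real})" by simp
  have "continuous_map ?X Met_TC.mtopology (ss I e)"
  proof (rule Met_TC.continuous_map_uniform_limit_alt[where F=sequentially and f="\<lambda>N x. \<Sum>n<N. ?t x n"])
    show "\<forall>\<^sub>F N in sequentially. continuous_map ?X Met_TC.mtopology (\<lambda>x. \<Sum>n<N. ?t x n)"
    proof (intro always_eventually allI)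
      fix N
      have "continuous_map ?X euclideanreal (\<lambda>x. ?t x n)" for n
      proof (cases "n \<in> e ` I")
        case True
        then have ii: "inv_into I e n \<in> I" by (simp add: inv_into_into)
        have "continuous_map ?X (top_of_set {0..1}) (\<lambda>x. x (inv_into I e n))"
          by (rule continuous_map_product_projection[OF ii])
        then have "continuous_map ?X euclideanreal (\<lambda>x. x (inv_into I e n))"
          by (simp add: continuous_map_in_subtopology)
        then show ?thesis using True unfolding hh_def by (auto intro: continuous_intros)
      next
        case False
        then show ?thesis unfolding hh_def by simp
      qed
      then show "continuous_map ?X Met_TC.mtopology (\<lambda>x. \<Sum>n<N. ?t x n)"
        by (auto intro: continuous_intros)
    qed
    show "ss I e \<in> topspace ?X \<rightarrow> UNIV" by simp
    show "\<not> trivial_limit sequentially" by simp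
    fix \<epsilon> :: real assume "0 < \<epsilon>"
    have "(\<lambda>N. 2 * (1/2::real)^N) \<longlonglongrightarrow> 2 * 0"
      by (intro tendsto_mult tendsto_const LIMSEQ_power_zero) simp
    then have "\<forall>\<^sub>F N in sequentially. 2 * (1/2::real)^N < \<epsilon>"
      using \<open>0 < \<epsilon>\<close> by (simp add: order_tendsto_iff)
    then show "\<forall>\<^sub>F N in sequentially. \<forall>x\<in>topspace ?X. dist (\<Sum>n<N. ?t x n) (ss I e x) < \<epsilon>"
    proof (rule eventually_mono, intro ballI)
      fix N x assume lt: "2 * (1/2::real)^N < \<epsilon>" and "x \<in> topspace ?X"
      then have x: "x \<in> PiE I (\<lambda>_. {0..1::real})" by simp
      have eq: "(\<Sum>n. ?t x (n + N)) = ss I e x - (\<Sum>n<N. ?t x n)"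
        unfolding ss_def using ss_summable[OF x] by (rule suminf_minus_initial_segment)
      have s2: "summable (\<lambda>n. ?t x (n + N))" using ss_summable[OF x] by (rule summable_ignore_initial_segment)
      have g: "summable (\<lambda>n. (1/2::real)^(n + N))"
        using summable_geometric[of "1/2::real"] by (intro summable_ignore_initial_segment) simp
      have "0 \<le> (\<Sum>n. ?t x (n + N))"
        using hh_bounds[OF x] s2 by (intro suminf_nonneg) auto
      moreover have "(\<Sum>n. ?t x (n + N)) \<le> (\<Sum>n. (1/2::real)^(n + N))"
        using hh_bounds[OF x] s2 g by (intro suminf_le) (auto intro!: mult_left_le)
      moreover have "(\<Sum>n. (1/2::real)^(n + N)) = 2 * (1/2)^N"
      proof -
        have "(\<Sum>n. (1/2::real)^(n + N)) = (\<Sum>n. (1/2)^N * (1/2::real)^n)"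
          by (simp add: power_add mult.commute)
        also have "\<dots> = (1/2)^N * (\<Sum>n. (1/2::real)^n)"
          by (rule suminf_mult) (rule summable_geometric, simp)
        also have "(\<Sum>n. (1/2::real)^n) = 2" using suminf_geometric[of "1/2::real"] by simp
        finally show ?thesis by simp
      qed
      ultimately show "dist (\<Sum>n<N. ?t x n) (ss I e x) < \<epsilon>"
        using eq lt by (simp add: dist_real_def)
    qed
  qed
  then show ?thesis by simp
qed

lemma mono_onto_cont:
  fixes h :: "real \<Rightarrow> real"
  assumes m: "mono_on {0..1} h" and im: "h ` {0..1} = {0..1}"
  shows "continuous_on {0..1} h"
proof -
  define H where "H t = (if t \<in> {0..1} then h t else t)" for t
  have "H ` UNIV = UNIV"
  proof safe
    fix y :: real
    show "y \<in> range H"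
    proof (cases "y \<in> {0..1}")
      case True
      then obtain t where "t \<in> {0..1}" "h t = y" using im True by (metis (no_types, lifting) imageE)
      then show ?thesis by (intro image_eqI[where x=t]) (auto simp: H_def)
    next
      case False
      then have "H y = y" using False unfolding H_def by auto
      then show ?thesis by (metis rangeI)
    qed
  qed simp
  then have oH: "open (H ` UNIV)" by simp
  have "continuous_on UNIV H"
  proof (rule continuous_onI_mono[OF oH])
    fix x y :: real assume "x \<le> y"
    have hb: "t \<in> {0..1} \<Longrightarrow> h t \<in> {0..1}" for t using im by blast
    show "H x \<le> H y"
    proof (cases "x \<in> {0..1}"; cases "y \<in> {0..1}")
      assume "x \<in> {0..1}" "y \<in> {0..1}"
      then show ?thesis using \<open>x \<le> y\<close> m unfolding H_def mono_on_def by simp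
    next
      assume "x \<in> {0..1}" "y \<notin> {0..1}"
      then show ?thesis using \<open>x \<le> y\<close> hb[of x] unfolding H_def by auto
    next
      assume "x \<notin> {0..1}" "y \<in> {0..1}"
      then show ?thesis using \<open>x \<le> y\<close> hb[of y] unfolding H_def by auto
    next
      assume "x \<notin> {0..1}" "y \<notin> {0..1}"
      then show ?thesis using \<open>x \<le> y\<close> unfolding H_def by auto
    qed
  qed
  then have "continuous_on {0..1} H" by (rule continuous_on_subset) simp
  then show ?thesis by (rule continuous_on_eq) (simp add: H_def)
qed

theorem mainTheorem16:
  fixes I :: "'i set" and C :: "('i \<Rightarrow> real) set"
  assumes "countable I"
    and "chain_0_1 I C"
    and "connectedin (product_topology (\<lambda>i. top_of_set {0..1::real}) I) C"
  shows "\<exists>f :: 'i \<Rightarrow> real \<Rightarrow> real.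
           (\<forall>i\<in>I. continuous_on {0..1} (f i) \<and> f i ` {0..1} = {0..1}
                   \<and> mono_on {0..1} (f i))
           \<and> (\<lambda>t. \<lambda>i\<in>I. f i t) ` {0..1} = C"
proof -
  let ?P = "PiE I (\<lambda>_. {0..1::real})"
  define z where "z = (\<lambda>i\<in>I. 0::real)"
  define o1 where "o1 = (\<lambda>i\<in>I. 1::real)"
  have CP: "C \<subseteq> ?P" and ch: "\<And>x y. x \<in> C \<Longrightarrow> y \<in> C \<Longrightarrow> coord_le I x y \<or> coord_le I y x"
    and zC: "z \<in> C" and oC: "o1 \<in> C"
    using assms(2) unfolding chain_0_1_def z_def o1_def by auto
  define e where "e = to_nat_on I"
  have inj: "inj_on e I" unfolding e_def using assms(1) by (rule inj_on_to_nat_on)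
  define s where "s = ss I e"
  define S where "S = s o1"
  have sz: "s z = 0"
  proof -
    have "hh I e z n = 0" for n unfolding hh_def z_def by (auto simp: inv_into_into)
    then show ?thesis unfolding s_def ss_def by simp
  qed
  have bnd: "0 \<le> s x \<and> s x \<le> S" if "x \<in> C" for x
  proof -
    have xP: "x \<in> ?P" using that CP by blast
    have "s z \<le> s x" unfolding s_def
      using zC CP xP by (intro ss_mono) (auto simp: coord_le_def z_def PiE_iff)
    moreover have "s x \<le> s o1" unfolding s_def
      using oC CP xP by (intro ss_mono) (auto simp: coord_le_def o1_def PiE_iff)
    ultimately show ?thesis using sz S_def by simp
  qed
  have S0: "0 \<le> S" using bnd[OF oC] by simp
  have injs: "inj_on s C"
  proof (rule inj_onI)
    fix x y assume x: "x \<in> C" and y: "y \<in> C" and eq: "s x = s y"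
    show "x = y"
    proof (rule ccontr)
      assume ne: "x \<noteq> y"
      from ch[OF x y] show False
      proof
        assume "coord_le I x y"
        then have "s x < s y" unfolding s_def using ss_strict[OF inj _ _ _ ne] x y CP by blast
        then show False using eq by simp
      next
        assume "coord_le I y x"
        then have "s y < s x" unfolding s_def using ss_strict[OF inj _ _ _ ne[symmetric]] x y CP by blast
        then show False using eq by simp
      qed
    qed
  qed
  have sC: "s ` C = {0..S}"
  proof
    show "s ` C \<subseteq> {0..S}" using bnd by auto
    have "connectedin euclideanreal (s ` C)"
      unfolding s_def by (rule connectedin_continuous_map_image[OF ss_cont assms(3)])
    then have "connected (s ` C)" by simp
    moreover have "0 \<in> s ` C" using zC sz by (metis image_eqI)
    moreover have "S \<in> s ` C" using oC S_def by simp
    ultimately show "{0..S} \<subseteq> s ` C" by (rule connected_contains_Icc)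
  qed
  define g where "g u = inv_into C s u" for u
  have gC: "g u \<in> C" and sg: "s (g u) = u" if "u \<in> {0..S}" for u
  proof -
    have "u \<in> s ` C" using that sC by simp
    then show "g u \<in> C" "s (g u) = u" unfolding g_def
      by (rule inv_into_into, rule f_inv_into_f)
  qed
  have gs: "g (s x) = x" if "x \<in> C" for x
    unfolding g_def using injs that by (rule inv_into_f_f)
  have St: "S * t \<in> {0..S}" if "t \<in> {0..1}" for t
    using that S0 by (auto simp: mult_left_le)
  have cover: "\<exists>t\<in>{0..1}. g (S * t) = x" if "x \<in> C" for x
  proof (cases "S = 0")
    case True
    then have "s x = S * 0" using bnd[OF that] by simp
    then show ?thesis using gs[OF that] by (metis atLeastAtMost_iff order_refl zero_le_one)
  next
    case False
    then have "S * (s x / S) = s x" by simp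
    moreover have "s x / S \<in> {0..1}" using bnd[OF that] False S0 by auto
    ultimately show ?thesis using gs[OF that] by metis
  qed
  have gimg: "(\<lambda>t. g (S * t)) ` {0..1} = C"
    using gC St cover by blast
  define f where "f i t = g (S * t) i" for i t
  have "\<forall>i\<in>I. continuous_on {0..1} (f i) \<and> f i ` {0..1} = {0..1} \<and> mono_on {0..1} (f i)"
  proof
    fix i assume i: "i \<in> I"
    have mono: "mono_on {0..1} (f i)"
    proof (rule mono_onI)
      fix t t' :: real assume t: "t \<in> {0..1}" and t': "t' \<in> {0..1}" and le: "t \<le> t'"
      let ?x = "g (S * t)" and ?y = "g (S * t')"
      have x: "?x \<in> C" and y: "?y \<in> C" using gC St t t' by auto
      have "coord_le I ?x ?y"
      proof (rule ccontr)
        assume nle: "\<not> coord_le I ?x ?y"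
        then have "coord_le I ?y ?x" using ch[OF x y] by blast
        moreover have "?y \<noteq> ?x" using nle by (auto simp: coord_le_def)
        ultimately have "s ?y < s ?x" unfolding s_def using ss_strict[OF inj] x y CP by blast
        then have "S * t' < S * t" using sg St t t' by simp
        moreover have "S * t \<le> S * t'" using S0 le by (simp add: mult_left_mono)
        ultimately show False by simp
      qed
      then show "f i t \<le> f i t'" unfolding f_def coord_le_def using i by blast
    qed
    have proj: "(\<lambda>x. x i) ` C = {0..1}"
    proof
      show "(\<lambda>x. x i) ` C \<subseteq> {0..1}" using CP i by (auto simp: PiE_iff)
      have "connectedin (top_of_set {0..1}) ((\<lambda>x. x i) ` C)"
        by (rule connectedin_continuous_map_image[OF continuous_map_product_projection[OF i] assms(3)])
      then have "connected ((\<lambda>x. x i) ` C)" by (simp add: connectedin_subtopology)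
      moreover have "0 \<in> (\<lambda>x. x i) ` C" using zC i unfolding z_def by (intro image_eqI[where x=z]) (auto simp: z_def)
      moreover have "1 \<in> (\<lambda>x. x i) ` C" using oC i unfolding o1_def by (intro image_eqI[where x=o1]) (auto simp: o1_def)
      ultimately show "{0..1} \<subseteq> (\<lambda>x. x i) ` C" by (rule connected_contains_Icc)
    qed
    have im: "f i ` {0..1} = {0..1}"
    proof -
      have "f i ` {0..1} = (\<lambda>x. x i) ` ((\<lambda>t. g (S * t)) ` {0..1})"
        unfolding f_def by (simp add: image_image)
      then show ?thesis using gimg proj by simp
    qed
    show "continuous_on {0..1} (f i) \<and> f i ` {0..1} = {0..1} \<and> mono_on {0..1} (f i)"
      using mono im mono_onto_cont by blast
  qed
  moreover have "(\<lambda>t. \<lambda>i\<in>I. f i t) ` {0..1} = C"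
  proof -
    have "(\<lambda>i\<in>I. f i t) = g (S * t)" if "t \<in> {0..1}" for t
    proof -
      have "g (S * t) \<in> ?P" using gC St that CP by blast
      then have "restrict (g (S * t)) I = g (S * t)" by (rule PiE_restrict)
      then show ?thesis unfolding f_def by simp
    qed
    then have "(\<lambda>t. \<lambda>i\<in>I. f i t) ` {0..1} = (\<lambda>t. g (S * t)) ` {0..1}"
      by (intro image_cong) auto
    then show ?thesis using gimg by simp
  qed
  ultimately show ?thesis by blast
qed

end
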